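(* Let $(M,g)$ be an asymptotically conic manifold of dimension $n\ge 3$, let $0<\lambda\le 3$, and let $K$ be an integral operator whose kernel satisfies, for all $m,m'\in M$, \[ |K(m,m')|\le C\frac{(xx')^{\frac{n-1}{2}}\big(\chi(\tfrac{x}{\lambda})+\chi(\tfrac{x'}{\lambda})\big)}{x+x'+\lambda},\qquad x=x(m),\ x'=x(m'). \] Then for $p \in [\frac{n}{2}, \frac{n+1}{2}]$ and $W_1, W_2 \in L^{2p}(M)$, the operator $W_1 K W_2$ is Hilbert–Schmidt and \[ \| W_1 K W_2 \|_{\mathcal{C}_2}\le C' \lambda^{-2+\frac{n}{p}} \| W_1 \|_{L^{2p}(M)}\| W_2 \|_{L^{2p}(M)}, \] where $C'$ depends on $C$, $p$, $\chi$ and $(M,g)$ but not on $\lambda$, $W_1$, $W_2$.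
   Context: $(M,g)$ is asymptotically conic: $M$ is the interior of a compact manifold with boundary $\overline M$ and $x$ is a smooth boundary defining function on $\overline M$ (positive on $M$) such that outside a compact set $(M,g)$ is isometric to $(0,\epsilon_0)_x\times\partial\overline M$ with $g=\frac{dx^2}{x^4}+\frac{h(x)}{x^2}$, $h(x)$ a smooth family of metrics on $\partial\overline M$. $\chi\in C_0^\infty((-\varepsilon,\varepsilon),[0,\infty))$ with $\chi=1$ on $[-\varepsilon/2,\varepsilon/2]$, for a small fixed $\varepsilon>0$. $W_j$ act by multiplication; $\mathcal{C}_2$ is the Hilbert–Schmidt class, with $\|A\|_{\mathcal{C}_2}^2=\int\!\!\int|A(m,m')|^2dV_g(m)dV_g(m')$ for an integral operator $A$. *)

theory Defs
  imports "HOL-Analysis.Analysis"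
begin

text \<open>Measure-theoretic model of an asymptotically conic manifold of dimension n.
  M is the Riemannian volume measure, x the boundary defining function.
  The collar (0,eps0) x Y (Y = boundary with a finite reference measure) is mapped
  injectively into M by Phi, with x(Phi(t,y)) = t, and the volume form there is
  t^(-n-1) rho(t,y) dt dY, rho bounded above and below by positive constants
  (rho = ratio of the volume densities of h(t) and the reference metric).
  The complement of the collar (a compact set) has finite volume and x is
  bounded above and below by positive constants there.\<close>

definition ac_structure ::
  "nat \<Rightarrow> 'm measure \<Rightarrow> ('m \<Rightarrow> real) \<Rightarrow> real \<Rightarrow> 'y measure
     \<Rightarrow> (real \<times> 'y \<Rightarrow> 'm) \<Rightarrow> (real \<times> 'y \<Rightarrow> real) \<Rightarrow> bool" where
  "ac_structure n M x eps0 Y Phi rho \<longleftrightarrow>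
     sigma_finite_measure M \<and>
     x \<in> borel_measurable M \<and> (\<forall>m\<in>space M. 0 < x m) \<and>
     0 < eps0 \<and> finite_measure Y \<and>
     Phi \<in> (lborel \<Otimes>\<^sub>M Y) \<rightarrow>\<^sub>M M \<and>
     inj_on Phi ({0<..<eps0} \<times> space Y) \<and>
     Phi ` ({0<..<eps0} \<times> space Y) \<in> sets M \<and>
     (\<forall>t\<in>{0<..<eps0}. \<forall>y\<in>space Y. x (Phi (t, y)) = t) \<and>
     rho \<in> borel_measurable (lborel \<Otimes>\<^sub>M Y) \<and>
     (\<exists>c1 c2. 0 < c1 \<and> (\<forall>t\<in>{0<..<eps0}. \<forall>y\<in>space Y.
                c1 \<le> rho (t, y) \<and> rho (t, y) \<le> c2)) \<and>
     (\<forall>A\<in>sets M. emeasure M (A \<inter> Phi ` ({0<..<eps0} \<times> space Y)) =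
        (\<integral>\<^sup>+ z. indicator ({0<..<eps0} \<times> space Y) z * indicator A (Phi z)
              * ennreal (fst z powr (- real (n + 1)) * rho z) \<partial>(lborel \<Otimes>\<^sub>M Y))) \<and>
     emeasure M (space M - Phi ` ({0<..<eps0} \<times> space Y)) < \<infinity> \<and>
     (\<exists>c B. 0 < c \<and> (\<forall>m\<in>space M - Phi ` ({0<..<eps0} \<times> space Y).
                c \<le> x m \<and> x m \<le> B))"

definition cutoff :: "real \<Rightarrow> (real \<Rightarrow> real) \<Rightarrow> bool" where
  "cutoff eps chi \<longleftrightarrow> 0 < eps \<and>
     (\<forall>k t. (deriv ^^ k) chi differentiable (at t)) \<and>
     (\<exists>d. 0 < d \<and> d < eps \<and> (\<forall>t. d \<le> \<bar>t\<bar> \<longrightarrow> chi t = 0)) \<and>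
     (\<forall>t. 0 \<le> chi t) \<and>
     (\<forall>t. \<bar>t\<bar> \<le> eps / 2 \<longrightarrow> chi t = 1)"

definition in_Lp :: "'m measure \<Rightarrow> real \<Rightarrow> ('m \<Rightarrow> complex) \<Rightarrow> bool" where
  "in_Lp M q W \<longleftrightarrow> W \<in> borel_measurable M \<and> integrable M (\<lambda>m. norm (W m) powr q)"

definition Lp_norm :: "'m measure \<Rightarrow> real \<Rightarrow> ('m \<Rightarrow> complex) \<Rightarrow> real" where
  "Lp_norm M q W = (\<integral>m. norm (W m) powr q \<partial>M) powr (1 / q)"

text \<open>An integral operator with kernel k is Hilbert-Schmidt iff k is in L^2(M x M);
  its Hilbert-Schmidt norm is the L^2 norm of the kernel.\<close>
definition hilbert_schmidt :: "'m measure \<Rightarrow> ('m \<times> 'm \<Rightarrow> complex) \<Rightarrow> bool" where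
  "hilbert_schmidt M k \<longleftrightarrow> k \<in> borel_measurable (M \<Otimes>\<^sub>M M) \<and>
     integrable (M \<Otimes>\<^sub>M M) (\<lambda>z. (norm (k z))\<^sup>2)"

definition hs_norm :: "'m measure \<Rightarrow> ('m \<times> 'm \<Rightarrow> complex) \<Rightarrow> real" where
  "hs_norm M k = sqrt (\<integral>z. (norm (k z))\<^sup>2 \<partial>(M \<Otimes>\<^sub>M M))"

end

theory Submission
  imports Defs
begin

lemma holder_nn:
  fixes f g :: "'a \<Rightarrow> real" and p q A B :: real
  assumes fm: "f \<in> borel_measurable M" and gm: "g \<in> borel_measurable M"
    and f0: "\<And>m. 0 \<le> f m" and g0: "\<And>m. 0 \<le> g m"
    and p: "p > 1" and q: "q > 1" and pq: "1/p + 1/q = 1"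
    and A: "(\<integral>\<^sup>+ m. ennreal (f m powr p) \<partial>M) \<le> ennreal A"
    and B: "(\<integral>\<^sup>+ m. ennreal (g m powr q) \<partial>M) \<le> ennreal B"
    and A0: "0 \<le> A" and B0: "0 \<le> B"
  shows "(\<integral>\<^sup>+ m. ennreal (f m * g m) \<partial>M) \<le> ennreal (A powr (1/p) * B powr (1/q))"
proof (cases "A = 0 \<or> B = 0")
  case True
  then show ?thesis
  proof
    assume "A = 0"
    then have "(\<integral>\<^sup>+ m. ennreal (f m powr p) \<partial>M) = 0" using A by simp
    then have "AE m in M. ennreal (f m powr p) = 0"
      by (subst (asm) nn_integral_0_iff_AE) (use fm in auto)
    then have ae: "AE m in M. ennreal (f m * g m) = 0"
      by eventually_elim (use f0 g0 p in auto)
    have "(\<integral>\<^sup>+ m. ennreal (f m * g m) \<partial>M) = 0"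
      using nn_integral_cong_AE[OF ae] by simp
    then show ?thesis by simp
  next
    assume "B = 0"
    then have "(\<integral>\<^sup>+ m. ennreal (g m powr q) \<partial>M) = 0" using B by simp
    then have "AE m in M. ennreal (g m powr q) = 0"
      by (subst (asm) nn_integral_0_iff_AE) (use gm in auto)
    then have ae: "AE m in M. ennreal (f m * g m) = 0"
      by eventually_elim (use f0 g0 q in auto)
    have "(\<integral>\<^sup>+ m. ennreal (f m * g m) \<partial>M) = 0"
      using nn_integral_cong_AE[OF ae] by simp
    then show ?thesis by simp
  qed
next
  case False
  then have Ap: "A > 0" and Bp: "B > 0" using A0 B0 by auto
  define a where "a = A powr (1/p)"
  define b where "b = B powr (1/q)"
  have ap: "a > 0" and bp: "b > 0" using Ap Bp by (auto simp: a_def b_def)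
  have apow: "a powr p = A" using Ap p by (simp add: a_def powr_powr)
  have bpow: "b powr q = B" using Bp q by (simp add: b_def powr_powr)
  have pt: "f m * g m \<le> a * b * ((f m / a) powr p / p + (g m / b) powr q / q)" for m
  proof -
    have "(f m / a) * (g m / b) \<le> (f m / a) powr p / p + (g m / b) powr q / q"
      by (rule Youngs_inequality) (use p q pq f0 g0 ap bp in auto)
    then have "a * b * ((f m / a) * (g m / b)) \<le> a * b * ((f m / a) powr p / p + (g m / b) powr q / q)"
      using ap bp by (intro mult_left_mono) auto
    then show ?thesis using ap bp by simp
  qed
  have e1: "(f m / a) powr p = f m powr p / A" for m
    using f0[of m] ap apow by (simp add: powr_divide)
  have e2: "(g m / b) powr q = g m powr q / B" for m
    using g0[of m] bp bpow by (simp add: powr_divide)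
  have "(\<integral>\<^sup>+ m. ennreal (f m * g m) \<partial>M) \<le>
        (\<integral>\<^sup>+ m. ennreal (a * b / (p * A)) * ennreal (f m powr p) + ennreal (a * b / (q * B)) * ennreal (g m powr q) \<partial>M)"
  proof (rule nn_integral_mono)
    fix m
    have "f m * g m \<le> a * b / (p * A) * f m powr p + a * b / (q * B) * g m powr q"
      using pt[of m] unfolding e1 e2 using Ap Bp p q by (simp add: field_simps)
    then have "ennreal (f m * g m) \<le> ennreal (a * b / (p * A) * f m powr p + a * b / (q * B) * g m powr q)"
      by (rule ennreal_leI)
    also have "\<dots> = ennreal (a * b / (p * A)) * ennreal (f m powr p) + ennreal (a * b / (q * B)) * ennreal (g m powr q)"
      using ap bp Ap Bp p q by (subst ennreal_plus) (auto simp: ennreal_mult[symmetric] del: ennreal_plus)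
    finally show "ennreal (f m * g m) \<le> ennreal (a * b / (p * A)) * ennreal (f m powr p) + ennreal (a * b / (q * B)) * ennreal (g m powr q)" .
  qed
  also have "\<dots> = ennreal (a * b / (p * A)) * (\<integral>\<^sup>+ m. ennreal (f m powr p) \<partial>M) + ennreal (a * b / (q * B)) * (\<integral>\<^sup>+ m. ennreal (g m powr q) \<partial>M)"
    using fm gm by (simp add: nn_integral_add nn_integral_cmult)
  also have "\<dots> \<le> ennreal (a * b / (p * A)) * ennreal A + ennreal (a * b / (q * B)) * ennreal B"
    by (intro add_mono mult_left_mono A B) auto
  also have "\<dots> = ennreal (a * b / p + a * b / q)"
  proof -
    have e1: "ennreal (a * b / (p * A)) * ennreal A = ennreal (a * b / (p * A) * A)"
      by (rule ennreal_mult[symmetric]) (use Ap ap bp p in auto)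
    have e1': "a * b / (p * A) * A = a * b / p" using Ap by simp
    have e2: "ennreal (a * b / (q * B)) * ennreal B = ennreal (a * b / (q * B) * B)"
      by (rule ennreal_mult[symmetric]) (use Bp ap bp q in auto)
    have e2': "a * b / (q * B) * B = a * b / q" using Bp by simp
    have e3: "ennreal (a * b / p) + ennreal (a * b / q) = ennreal (a * b / p + a * b / q)"
      by (rule ennreal_plus[symmetric]) (use ap bp p q in auto)
    show ?thesis unfolding e1 e2 e1' e2' e3 ..
  qed
  also have "a * b / p + a * b / q = a * b"
  proof -
    have "a * b / p + a * b / q = a * b * (1 / p + 1 / q)" by (simp add: algebra_simps)
    then show ?thesis using pq by simp
  qed
  finally show ?thesis by (simp add: a_def b_def)
qed

lemma int_powr_0:
  fixes a b :: real
  assumes "a > 0" "b > 0"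
  shows "(\<integral>\<^sup>+ t. ennreal (indicator {0<..<a} t * t powr (b - 1)) \<partial>lborel) \<le> ennreal (a powr b / b)"
proof -
  have "((\<lambda>t. t powr (b - 1)) has_integral (a powr (b - 1 + 1) / (b - 1 + 1))) {0..a}"
    by (rule has_integral_powr_from_0) (use assms in auto)
  then have "integral\<^sup>N lborel (\<lambda>t. indicator {0..a} t * t powr (b - 1)) = a powr b / b"
    by (intro nn_integral_has_integral_lebesgue) auto
  moreover have "(\<integral>\<^sup>+ t. ennreal (indicator {0<..<a} t * t powr (b - 1)) \<partial>lborel) \<le>
      integral\<^sup>N lborel (\<lambda>t. indicator {0..a} t * t powr (b - 1))"
    by (intro nn_integral_mono ennreal_leI) (auto simp: indicator_def)
  ultimately show ?thesis by simp
qed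

lemma int_powr_inf:
  fixes a e :: real
  assumes "a > 0" "e < -1"
  shows "(\<integral>\<^sup>+ t. ennreal (indicator {a..} t * t powr e) \<partial>lborel) = ennreal (- (a powr (e + 1)) / (e + 1))"
proof -
  have "((\<lambda>t. t powr e) has_integral (- (a powr (e + 1)) / (e + 1))) {a..}"
    by (rule has_integral_powr_to_inf) (use assms in auto)
  then show ?thesis
    by (intro nn_integral_has_integral_lebesgue) (use assms in auto)
qed

lemma collar_int:
  fixes x :: "'m \<Rightarrow> real" and Phi :: "real \<times> 'y \<Rightarrow> 'm" and h :: "real \<Rightarrow> real"
    and rho :: "real \<times> 'y \<Rightarrow> real" and n :: nat
  assumes Phim: "Phi \<in> (lborel \<Otimes>\<^sub>M Y) \<rightarrow>\<^sub>M M"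
    and Um: "Phi ` ({0<..<e} \<times> space Y) \<in> sets M"
    and xPhi: "\<forall>t\<in>{0<..<e}. \<forall>y\<in>space Y. x (Phi (t, y)) = t"
    and rhom: "rho \<in> borel_measurable (lborel \<Otimes>\<^sub>M Y)"
    and rhob: "\<forall>t\<in>{0<..<e}. \<forall>y\<in>space Y. rho (t, y) \<le> c2"
    and rho0: "\<forall>t\<in>{0<..<e}. \<forall>y\<in>space Y. 0 \<le> rho (t, y)"
    and em: "\<forall>A\<in>sets M. emeasure M (A \<inter> Phi ` ({0<..<e} \<times> space Y)) =
        (\<integral>\<^sup>+ z. indicator ({0<..<e} \<times> space Y) z * indicator A (Phi z)
              * ennreal (fst z powr (- real (n + 1)) * rho z) \<partial>(lborel \<Otimes>\<^sub>M Y))"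
    and Y: "finite_measure Y"
    and xm: "x \<in> borel_measurable M"
    and hm: "h \<in> borel_measurable borel" and h0: "\<And>t. 0 \<le> h t"
    and c2: "0 \<le> c2"
  shows "(\<integral>\<^sup>+ m. indicator (Phi ` ({0<..<e} \<times> space Y)) m * ennreal (h (x m)) \<partial>M)
     \<le> ennreal c2 * emeasure Y (space Y) *
        (\<integral>\<^sup>+ t. ennreal (indicator {0<..<e} t * (h t * t powr (- real (n + 1)))) \<partial>lborel)"
proof -
  interpret Y: finite_measure Y by (rule Y)
  define S where "S = {0<..<e} \<times> space Y"
  define U where "U = Phi ` S"
  define dens where "dens z = indicator S z * ennreal (fst z powr (- real (n + 1)) * rho z)" for z
  define N where "N = density (lborel \<Otimes>\<^sub>M Y) dens"
  have Sm: "S \<in> sets (lborel \<Otimes>\<^sub>M Y)" unfolding S_def by (intro pair_measureI) auto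
  have [measurable]: "dens \<in> borel_measurable (lborel \<Otimes>\<^sub>M Y)"
    unfolding dens_def using Sm rhom by measurable
  have Um': "U \<in> sets M" using Um by (simp add: U_def S_def)
  have PhiN: "Phi \<in> N \<rightarrow>\<^sub>M M" using Phim by (simp add: N_def)
  have eq: "density M (indicator U) = distr N M Phi"
  proof (rule measure_eqI)
    show "sets (density M (indicator U)) = sets (distr N M Phi)" by simp
  next
    fix A assume "A \<in> sets (density M (indicator U))"
    then have A: "A \<in> sets M" by simp
    have "emeasure (density M (indicator U)) A = emeasure M (A \<inter> U)"
      using emeasure_restricted[OF Um' A] by (simp add: Int_commute)
    also have "\<dots> = (\<integral>\<^sup>+ z. dens z * indicator (Phi -` A \<inter> space (lborel \<Otimes>\<^sub>M Y)) z \<partial>(lborel \<Otimes>\<^sub>M Y))"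
      unfolding U_def S_def using em A
      by (auto intro!: nn_integral_cong simp: dens_def indicator_def measurable_space[OF Phim] S_def)
    also have "\<dots> = emeasure N (Phi -` A \<inter> space N)"
      unfolding N_def using measurable_sets[OF Phim A] by (subst emeasure_density) auto
    also have "\<dots> = emeasure (distr N M Phi) A"
      using A PhiN by (simp add: emeasure_distr)
    finally show "emeasure (density M (indicator U)) A = emeasure (distr N M Phi) A" .
  qed
  have [measurable]: "h \<in> borel_measurable borel" by (rule hm)
  have [measurable]: "x \<in> borel_measurable M" by (rule xm)
  have "(\<integral>\<^sup>+ m. indicator U m * ennreal (h (x m)) \<partial>M) = integral\<^sup>N (density M (indicator U)) (\<lambda>m. ennreal (h (x m)))"
    using Um' by (subst nn_integral_density) auto
  also have "\<dots> = (\<integral>\<^sup>+ z. ennreal (h (x (Phi z))) \<partial>N)"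
    unfolding eq using PhiN by (subst nn_integral_distr) auto
  also have "\<dots> = (\<integral>\<^sup>+ z. dens z * ennreal (h (x (Phi z))) \<partial>(lborel \<Otimes>\<^sub>M Y))"
    unfolding N_def using Phim by (subst nn_integral_density) auto
  also have "\<dots> \<le> (\<integral>\<^sup>+ z. (ennreal c2 * ennreal (indicator {0<..<e} (fst z) * (h (fst z) * fst z powr (- real (n + 1)))))
                     * indicator (space Y) (snd z) \<partial>(lborel \<Otimes>\<^sub>M Y))"
  proof (rule nn_integral_mono)
    fix z :: "real \<times> 'y" assume "z \<in> space (lborel \<Otimes>\<^sub>M Y)"
    obtain t y where z: "z = (t, y)" by (cases z)
    show "dens z * ennreal (h (x (Phi z))) \<le> (ennreal c2 * ennreal (indicator {0<..<e} (fst z) * (h (fst z) * fst z powr (- real (n + 1)))))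
                     * indicator (space Y) (snd z)"
    proof (cases "z \<in> S")
      case True
      then have t: "t \<in> {0<..<e}" and y: "y \<in> space Y" by (auto simp: S_def z)
      have xp: "x (Phi (t, y)) = t" using xPhi t y by simp
      have "t powr (- real (n + 1)) * rho (t, y) * h t \<le> c2 * (h t * t powr (- real (n + 1)))"
      proof -
        have "rho (t, y) \<le> c2" using rhob t y by auto
        moreover have "0 \<le> h t * t powr (- real (n + 1))" using h0[of t] by simp
        ultimately have "rho (t, y) * (h t * t powr (- real (n + 1))) \<le> c2 * (h t * t powr (- real (n + 1)))"
          by (rule mult_right_mono)
        then show ?thesis by (simp add: mult_ac)
      qed
      then have "ennreal (t powr (- real (n + 1)) * rho (t, y)) * ennreal (h t) \<le> ennreal c2 * ennreal (h t * t powr (- real (n + 1)))"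
        using c2 h0[of t] t rho0 y
        by (auto simp: ennreal_mult[symmetric] intro!: ennreal_leI mult_nonneg_nonneg)
      then show ?thesis using True t y by (simp add: dens_def xp z)
    next
      case False
      then show ?thesis by (simp add: dens_def)
    qed
  qed
  also have "\<dots> = (\<integral>\<^sup>+ t. \<integral>\<^sup>+ y. (ennreal c2 * ennreal (indicator {0<..<e} t * (h t * t powr (- real (n + 1)))))
                     * indicator (space Y) y \<partial>Y \<partial>lborel)"
    by (subst Y.nn_integral_fst[symmetric]) (auto intro!: borel_measurable_indicator)
  also have "\<dots> = (\<integral>\<^sup>+ t. (ennreal c2 * ennreal (indicator {0<..<e} t * (h t * t powr (- real (n + 1))))) * emeasure Y (space Y) \<partial>lborel)"
    by (subst nn_integral_cmult_indicator) auto
  also have "\<dots> = ennreal c2 * emeasure Y (space Y) * (\<integral>\<^sup>+ t. ennreal (indicator {0<..<e} t * (h t * t powr (- real (n + 1)))) \<partial>lborel)"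
  proof -
    have "(\<integral>\<^sup>+ t. (ennreal c2 * ennreal (indicator {0<..<e} t * (h t * t powr (- real (n + 1))))) * emeasure Y (space Y) \<partial>lborel)
      = (\<integral>\<^sup>+ t. (ennreal c2 * emeasure Y (space Y)) * ennreal (indicator {0<..<e} t * (h t * t powr (- real (n + 1)))) \<partial>lborel)"
      by (simp add: mult_ac)
    also have "\<dots> = ennreal c2 * emeasure Y (space Y) * (\<integral>\<^sup>+ t. ennreal (indicator {0<..<e} t * (h t * t powr (- real (n + 1)))) \<partial>lborel)"
      by (rule nn_integral_cmult) measurable
    finally show ?thesis .
  qed
  finally show ?thesis by (simp add: U_def S_def)
qed

lemma cutoff_props:
  assumes "cutoff eps chi"
  shows "\<exists>d Kc. 0 < d \<and> 0 \<le> Kc \<and> (\<forall>t. d \<le> \<bar>t\<bar> \<longrightarrow> chi t = 0) \<and> (\<forall>t. 0 \<le> chi t \<and> chi t \<le> Kc)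
     \<and> chi \<in> borel_measurable borel"
proof -
  from assms obtain d where d: "0 < d" "\<forall>t. d \<le> \<bar>t\<bar> \<longrightarrow> chi t = 0"
    and c0: "\<forall>t. 0 \<le> chi t" and dif: "\<forall>k t. (deriv ^^ k) chi differentiable (at t)"
    unfolding cutoff_def by blast
  have "\<forall>t. chi differentiable (at t)" using dif[rule_format, of 0] by simp
  then have cont: "continuous_on UNIV chi"
    by (simp add: differentiable_imp_continuous_within continuous_at_imp_continuous_on)
  then have "compact (chi ` {-d..d})"
    by (intro compact_continuous_image) (auto intro: continuous_on_subset)
  then have "bounded (chi ` {-d..d})" by (rule compact_imp_bounded)
  then obtain Kc where Kc: "\<forall>y\<in>chi ` {-d..d}. norm y \<le> Kc" unfolding bounded_iff by blast
  have "\<forall>t. 0 \<le> chi t \<and> chi t \<le> Kc"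
  proof
    fix t show "0 \<le> chi t \<and> chi t \<le> Kc"
    proof (cases "\<bar>t\<bar> \<le> d")
      case True then show ?thesis using Kc c0 by force
    next
      case False then have "chi t = 0" using d by auto
      moreover have "0 \<le> Kc" using Kc[rule_format, of "chi 0"] d(1) by force
      ultimately show ?thesis by simp
    qed
  qed
  then show ?thesis
    using d borel_measurable_continuous_onI[OF cont] c0
    by (intro exI[of _ d] exI[of _ Kc]) (auto intro: order_trans)
qed

lemma hF_pt:
  fixes chi :: "real \<Rightarrow> real" and lam q d Kc a t :: real
  assumes chi: "\<forall>t. 0 \<le> chi t \<and> chi t \<le> Kc" and dz: "\<forall>t. d \<le> \<bar>t\<bar> \<longrightarrow> chi t = 0"
    and lam: "0 < lam" and q: "0 < q" and t: "0 < t"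
  shows "(t powr a * (chi (t / lam))\<^sup>2) powr q \<le> Kc powr (2 * q) * (indicator {..<d * lam} t * t powr (a * q))"
proof -
  have e: "(t powr a * (chi (t / lam))\<^sup>2) powr q = t powr (a * q) * chi (t / lam) powr (2 * q)"
  proof -
    have "(chi (t / lam))\<^sup>2 = chi (t / lam) powr 2"
      using chi by (cases "chi (t / lam) = 0") (auto simp: powr_realpow')
    then show ?thesis by (simp add: powr_mult powr_powr mult.commute)
  qed
  show ?thesis
  proof (cases "t < d * lam")
    case True
    have k: "chi (t / lam) powr (2 * q) \<le> Kc powr (2 * q)"
      using chi q by (intro powr_mono2) auto
    have "t powr (a * q) * chi (t / lam) powr (2 * q) \<le> t powr (a * q) * Kc powr (2 * q)"
      by (rule mult_left_mono[OF k]) simp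
    then show ?thesis unfolding e using True
      by (simp add: mult.commute)
  next
    case False
    then have "d \<le> \<bar>t / lam\<bar>" using lam t by (simp add: field_simps)
    then have "chi (t / lam) = 0" using dz by auto
    then show ?thesis unfolding e using False q by simp
  qed
qed

lemma hG_pt:
  fixes lam q a t :: real
  assumes lam: "0 < lam" and q: "0 < q" and t: "0 < t"
  shows "(t powr a / (t + lam)\<^sup>2) powr q = t powr (a * q) / (t + lam) powr (2 * q)"
proof -
  have "(t + lam)\<^sup>2 = (t + lam) powr 2" using lam t by (simp add: powr_realpow')
  then have "((t + lam)\<^sup>2) powr q = (t + lam) powr (2 * q)" by (simp only: powr_powr)
  then show ?thesis using lam t by (simp add: powr_divide powr_powr mult.commute)
qed

lemma M_bound:
  fixes n :: nat and M :: "'m measure" and x :: "'m \<Rightarrow> real"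
    and Y :: "'y measure" and Phi :: "real \<times> 'y \<Rightarrow> 'm" and rho :: "real \<times> 'y \<Rightarrow> real"
  assumes ac: "ac_structure n M x eps0 Y Phi rho"
  shows "\<exists>Kac\<ge>0. \<forall>h P Q. h \<in> borel_measurable borel \<and> (\<forall>t. 0 \<le> h t) \<and> 0 \<le> P \<and> 0 \<le> Q \<and>
     (\<integral>\<^sup>+ t. ennreal (indicator {0<..<eps0} t * (h t * t powr (- real (n + 1)))) \<partial>lborel) \<le> ennreal P \<and>
     (\<forall>m\<in>space M - Phi ` ({0<..<eps0} \<times> space Y). h (x m) \<le> Q)
     \<longrightarrow> (\<integral>\<^sup>+ m. ennreal (h (x m)) \<partial>M) \<le> ennreal (Kac * (P + Q))"
proof -
  define U where "U = Phi ` ({0<..<eps0} \<times> space Y)"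
  from ac have Phim: "Phi \<in> (lborel \<Otimes>\<^sub>M Y) \<rightarrow>\<^sub>M M"
    and Um: "U \<in> sets M"
    and xPhi: "\<forall>t\<in>{0<..<eps0}. \<forall>y\<in>space Y. x (Phi (t, y)) = t"
    and rhom: "rho \<in> borel_measurable (lborel \<Otimes>\<^sub>M Y)"
    and em: "\<forall>A\<in>sets M. emeasure M (A \<inter> Phi ` ({0<..<eps0} \<times> space Y)) =
        (\<integral>\<^sup>+ z. indicator ({0<..<eps0} \<times> space Y) z * indicator A (Phi z)
              * ennreal (fst z powr (- real (n + 1)) * rho z) \<partial>(lborel \<Otimes>\<^sub>M Y))"
    and Y: "finite_measure Y"
    and xm: "x \<in> borel_measurable M"
    and Vfin: "emeasure M (space M - U) < \<infinity>"
    unfolding ac_structure_def U_def by auto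
  from ac obtain c1 c2 where c1: "0 < c1" and cc: "\<forall>t\<in>{0<..<eps0}. \<forall>y\<in>space Y.
                c1 \<le> rho (t, y) \<and> rho (t, y) \<le> c2"
    unfolding ac_structure_def by blast
  interpret Y: finite_measure Y by (rule Y)
  define c2' where "c2' = max c2 0"
  define muY where "muY = measure Y (space Y)"
  define V where "V = measure M (space M - U)"
  have muY: "emeasure Y (space Y) = ennreal muY" by (simp add: muY_def Y.emeasure_eq_measure)
  have Vm: "emeasure M (space M - U) = ennreal V"
    using Vfin by (simp add: V_def emeasure_eq_ennreal_measure)
  have c2': "0 \<le> c2'" by (simp add: c2'_def)
  have muY0: "0 \<le> muY" and V0: "0 \<le> V" by (auto simp: muY_def V_def)
  show ?thesis
  proof (intro exI[of _ "c2' * muY + V"] conjI allI impI)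
    show "0 \<le> c2' * muY + V" using c2' muY0 V0 by simp
    fix h P Q assume H: "h \<in> borel_measurable borel \<and> (\<forall>t. 0 \<le> h t) \<and> 0 \<le> P \<and> 0 \<le> Q \<and>
     (\<integral>\<^sup>+ t. ennreal (indicator {0<..<eps0} t * (h t * t powr (- real (n + 1)))) \<partial>lborel) \<le> ennreal P \<and>
     (\<forall>m\<in>space M - Phi ` ({0<..<eps0} \<times> space Y). h (x m) \<le> Q)"
    then have hm[measurable]: "h \<in> borel_measurable borel" and h0: "\<And>t. 0 \<le> h t" and P0: "0 \<le> P" and Q0: "0 \<le> Q"
      and PB: "(\<integral>\<^sup>+ t. ennreal (indicator {0<..<eps0} t * (h t * t powr (- real (n + 1)))) \<partial>lborel) \<le> ennreal P"
      and QB: "\<And>m. m \<in> space M - U \<Longrightarrow> h (x m) \<le> Q"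
      unfolding U_def by auto
    have [measurable]: "x \<in> borel_measurable M" by (rule xm)
    have [measurable]: "U \<in> sets M" by (rule Um)
    have "(\<integral>\<^sup>+ m. ennreal (h (x m)) \<partial>M) = (\<integral>\<^sup>+ m. indicator U m * ennreal (h (x m)) + indicator (space M - U) m * ennreal (h (x m)) \<partial>M)"
      by (intro nn_integral_cong) (auto simp: indicator_def)
    also have "\<dots> = (\<integral>\<^sup>+ m. indicator U m * ennreal (h (x m)) \<partial>M) + (\<integral>\<^sup>+ m. indicator (space M - U) m * ennreal (h (x m)) \<partial>M)"
      by (rule nn_integral_add) measurable
    also have "(\<integral>\<^sup>+ m. indicator U m * ennreal (h (x m)) \<partial>M) \<le> ennreal c2' * emeasure Y (space Y) *
        (\<integral>\<^sup>+ t. ennreal (indicator {0<..<eps0} t * (h t * t powr (- real (n + 1)))) \<partial>lborel)"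
      unfolding U_def
      by (rule collar_int[OF Phim Um[unfolded U_def] xPhi rhom _ _ em Y xm hm h0 c2'])
         (use cc c1 in \<open>fastforce simp: c2'_def le_max_iff_disj\<close>)+
    also have "\<dots> \<le> ennreal c2' * ennreal muY * ennreal P"
      unfolding muY by (intro mult_left_mono PB) auto
    also have "(\<integral>\<^sup>+ m. indicator (space M - U) m * ennreal (h (x m)) \<partial>M) \<le> (\<integral>\<^sup>+ m. ennreal Q * indicator (space M - U) m \<partial>M)"
      by (intro nn_integral_mono) (auto simp: indicator_def QB intro!: ennreal_leI)
    also have "\<dots> = ennreal Q * ennreal V"
      using Um by (subst nn_integral_cmult_indicator) (auto simp: Vm)
    also have "ennreal c2' * ennreal muY * ennreal P + ennreal Q * ennreal V = ennreal (c2' * muY * P + Q * V)"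
      using c2' muY0 V0 P0 Q0 by (simp add: ennreal_mult[symmetric])
    also have "c2' * muY * P + Q * V \<le> (c2' * muY + V) * (P + Q)"
      using c2' muY0 V0 P0 Q0 by (simp add: algebra_simps)
    finally show "(\<integral>\<^sup>+ m. ennreal (h (x m)) \<partial>M) \<le> ennreal ((c2' * muY + V) * (P + Q))"
      by (simp add: add_mono ennreal_leI)
  qed
qed

lemma F_int_bound:
  fixes n :: nat and M :: "'m measure" and x :: "'m \<Rightarrow> real"
    and Y :: "'y measure" and Phi :: "real \<times> 'y \<Rightarrow> 'm" and rho :: "real \<times> 'y \<Rightarrow> real"
    and chi :: "real \<Rightarrow> real" and q al d Kc :: real
  assumes ac: "ac_structure n M x eps0 Y Phi rho"
    and q: "0 < q" and al: "al = (real n - 1) * q - real n" "0 < al" and n1: "1 \<le> n"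
    and d: "0 < d" and Kc: "0 \<le> Kc" and dz: "\<forall>t. d \<le> \<bar>t\<bar> \<longrightarrow> chi t = 0"
    and chi: "\<forall>t. 0 \<le> chi t \<and> chi t \<le> Kc" and chim: "chi \<in> borel_measurable borel"
  shows "\<exists>DF\<ge>0. \<forall>lam. 0 < lam \<longrightarrow>
     (\<integral>\<^sup>+ m. ennreal ((x m powr (real n - 1) * (chi (x m / lam))\<^sup>2) powr q) \<partial>M) \<le> ennreal (DF * lam powr al)"
proof -
  obtain Kac where KK: "Kac \<ge> 0 \<and> (\<forall>h P Q. h \<in> borel_measurable borel \<and> (\<forall>t. 0 \<le> h t) \<and> 0 \<le> P \<and> 0 \<le> Q \<and>
     (\<integral>\<^sup>+ t. ennreal (indicator {0<..<eps0} t * (h t * t powr (- real (n + 1)))) \<partial>lborel) \<le> ennreal P \<and>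
     (\<forall>m\<in>space M - Phi ` ({0<..<eps0} \<times> space Y). h (x m) \<le> Q)
     \<longrightarrow> (\<integral>\<^sup>+ m. ennreal (h (x m)) \<partial>M) \<le> ennreal (Kac * (P + Q)))"
    using M_bound[OF ac] by (rule exE)
  have Kac0: "Kac \<ge> 0" using KK by (rule conjunct1)
  note Kac = KK[THEN conjunct2, rule_format]
  from ac obtain c B where c: "0 < c" and cB: "\<forall>m\<in>space M - Phi ` ({0<..<eps0} \<times> space Y). c \<le> x m \<and> x m \<le> B"
    unfolding ac_structure_def by blast
  define K2 where "K2 = Kc powr (2 * q)"
  have K2: "0 \<le> K2" by (simp add: K2_def)
  define DF where "DF = Kac * (K2 * d powr al / al + K2 * \<bar>B\<bar> powr ((real n - 1) * q) * (d / c) powr al)"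
  show ?thesis
  proof (intro exI[of _ DF] conjI allI impI)
    show "0 \<le> DF" unfolding DF_def using Kac0 K2 al d c by (intro mult_nonneg_nonneg add_nonneg_nonneg) auto
    fix lam :: real assume lam: "0 < lam"
    define h where "h t = (t powr (real n - 1) * (chi (t / lam))\<^sup>2) powr q" for t
    have [measurable]: "chi \<in> borel_measurable borel" by (rule chim)
    have hm: "h \<in> borel_measurable borel" unfolding h_def by measurable
    have h0: "\<forall>t. 0 \<le> h t" by (simp add: h_def)
    have hpt: "h t \<le> K2 * (indicator {..<d * lam} t * t powr ((real n - 1) * q))" if "0 < t" for t
      unfolding h_def K2_def by (rule hF_pt[OF chi dz lam q that])
    define P where "P = K2 * (d * lam) powr al / al"
    define Q where "Q = K2 * \<bar>B\<bar> powr ((real n - 1) * q) * ((d / c) powr al * lam powr al)"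
    have P0: "0 \<le> P" and Q0: "0 \<le> Q" using K2 al by (auto simp: P_def Q_def)
    have PB: "(\<integral>\<^sup>+ t. ennreal (indicator {0<..<eps0} t * (h t * t powr (- real (n + 1)))) \<partial>lborel) \<le> ennreal P"
    proof -
      have "(\<integral>\<^sup>+ t. ennreal (indicator {0<..<eps0} t * (h t * t powr (- real (n + 1)))) \<partial>lborel)
          \<le> (\<integral>\<^sup>+ t. ennreal K2 * ennreal (indicator {0<..<d * lam} t * t powr (al - 1)) \<partial>lborel)"
      proof (rule nn_integral_mono)
        fix t :: real
        show "ennreal (indicator {0<..<eps0} t * (h t * t powr (- real (n + 1)))) \<le> ennreal K2 * ennreal (indicator {0<..<d * lam} t * t powr (al - 1))"
        proof (cases "0 < t \<and> t < eps0")
          case True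
          then have t: "0 < t" by simp
          have "h t * t powr (- real (n + 1)) \<le> K2 * (indicator {..<d * lam} t * t powr ((real n - 1) * q)) * t powr (- real (n + 1))"
            by (rule mult_right_mono[OF hpt[OF t]]) simp
          also have "\<dots> = K2 * (indicator {0<..<d * lam} t * t powr (al - 1))"
            using t by (simp add: al(1) mult.assoc powr_add[symmetric] indicator_def algebra_simps)
          finally have "ennreal (indicator {0<..<eps0} t * (h t * t powr (- real (n + 1)))) \<le> ennreal (K2 * (indicator {0<..<d * lam} t * t powr (al - 1)))"
            using True by (intro ennreal_leI) (simp add: indicator_def)
          then show ?thesis using K2 by (simp add: ennreal_mult)
        next
          case False
          then have "indicator {0<..<eps0} t = (0::real)" by (auto simp: indicator_def)
          then show ?thesis by simp
        qed
      qed
      also have "\<dots> = ennreal K2 * (\<integral>\<^sup>+ t. ennreal (indicator {0<..<d * lam} t * t powr (al - 1)) \<partial>lborel)"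
        by (rule nn_integral_cmult) measurable
      also have "\<dots> \<le> ennreal K2 * ennreal ((d * lam) powr al / al)"
        using d lam al by (intro mult_left_mono int_powr_0) auto
      also have "\<dots> = ennreal P" unfolding P_def using K2 al by (subst ennreal_mult[symmetric]) auto
      finally show ?thesis .
    qed
    have QB: "\<forall>m\<in>space M - Phi ` ({0<..<eps0} \<times> space Y). h (x m) \<le> Q"
    proof
      fix m assume m: "m \<in> space M - Phi ` ({0<..<eps0} \<times> space Y)"
      then have cx: "c \<le> x m" and xB: "x m \<le> B" using cB by auto
      have xp: "0 < x m" using c cx by simp
      show "h (x m) \<le> Q"
      proof (cases "x m < d * lam")
        case True
        have "h (x m) \<le> K2 * x m powr ((real n - 1) * q)" using hpt[OF xp] True by simp
        also have "\<dots> \<le> K2 * \<bar>B\<bar> powr ((real n - 1) * q)"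
          using xp xB q n1 K2 by (intro mult_left_mono powr_mono2) auto
        also have "\<dots> \<le> K2 * \<bar>B\<bar> powr ((real n - 1) * q) * (d * lam / c) powr al"
        proof -
          have "1 \<le> d * lam / c" using True cx c by (simp add: field_simps)
          then have "1 \<le> (d * lam / c) powr al" using al by (intro ge_one_powr_ge_zero) auto
          moreover have "0 \<le> K2 * \<bar>B\<bar> powr ((real n - 1) * q)" using K2 by simp
          ultimately show ?thesis using mult_left_mono by fastforce
        qed
        also have "(d * lam / c) powr al = (d / c) powr al * lam powr al"
          using d lam c by (simp add: powr_mult[symmetric])
        finally show ?thesis by (simp add: Q_def)
      next
        case False
        then have "h (x m) \<le> 0" using hpt[OF xp] by simp
        then show ?thesis using Q0 by simp
      qed
    qed
    have "(\<integral>\<^sup>+ m. ennreal (h (x m)) \<partial>M) \<le> ennreal (Kac * (P + Q))"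
      using hm h0 P0 Q0 PB QB by (intro Kac) (simp only: conj_absorb simp_thms)
    also have "Kac * (P + Q) = DF * lam powr al"
      unfolding DF_def P_def Q_def using d lam
      by (simp add: powr_mult algebra_simps)
    finally show "(\<integral>\<^sup>+ m. ennreal ((x m powr (real n - 1) * (chi (x m / lam))\<^sup>2) powr q) \<partial>M) \<le> ennreal (DF * lam powr al)"
      by (simp add: h_def)
  qed
qed

lemma G_int_bound:
  fixes n :: nat and M :: "'m measure" and x :: "'m \<Rightarrow> real"
    and Y :: "'y measure" and Phi :: "real \<times> 'y \<Rightarrow> 'm" and rho :: "real \<times> 'y \<Rightarrow> real"
    and q al :: real
  assumes ac: "ac_structure n M x eps0 Y Phi rho"
    and q: "0 < q" and al: "al = (real n - 1) * q - real n" "0 < al" "al < 2 * q" and n1: "1 \<le> n"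
  shows "\<exists>DG\<ge>0. \<forall>lam. 0 < lam \<and> lam \<le> 3 \<longrightarrow>
     (\<integral>\<^sup>+ m. ennreal ((x m powr (real n - 1) / (x m + lam)\<^sup>2) powr q) \<partial>M) \<le> ennreal (DG * lam powr (al - 2 * q))"
proof -
  obtain Kac where KK: "Kac \<ge> 0 \<and> (\<forall>h P Q. h \<in> borel_measurable borel \<and> (\<forall>t. 0 \<le> h t) \<and> 0 \<le> P \<and> 0 \<le> Q \<and>
     (\<integral>\<^sup>+ t. ennreal (indicator {0<..<eps0} t * (h t * t powr (- real (n + 1)))) \<partial>lborel) \<le> ennreal P \<and>
     (\<forall>m\<in>space M - Phi ` ({0<..<eps0} \<times> space Y). h (x m) \<le> Q)
     \<longrightarrow> (\<integral>\<^sup>+ m. ennreal (h (x m)) \<partial>M) \<le> ennreal (Kac * (P + Q)))"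
    using M_bound[OF ac] by (rule exE)
  have Kac0: "Kac \<ge> 0" using KK by (rule conjunct1)
  note Kac = KK[THEN conjunct2, rule_format]
  from ac obtain c B where c: "0 < c" and cB: "\<forall>m\<in>space M - Phi ` ({0<..<eps0} \<times> space Y). c \<le> x m \<and> x m \<le> B"
    unfolding ac_structure_def by blast
  define K1 where "K1 = 1 / al + 1 / (2 * q - al)"
  define K3 where "K3 = \<bar>B\<bar> powr ((real n - 1) * q) / c powr (2 * q) * 3 powr (2 * q - al)"
  have K1: "0 \<le> K1" and K3: "0 \<le> K3" using al by (auto simp: K1_def K3_def)
  define DG where "DG = Kac * (K1 + K3)"
  show ?thesis
  proof (intro exI[of _ DG] conjI allI impI)
    show "0 \<le> DG" unfolding DG_def using Kac0 K1 K3 by simp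
    fix lam :: real assume lam: "0 < lam \<and> lam \<le> 3"
    then have lam0: "0 < lam" and lam3: "lam \<le> 3" by auto
    define h where "h t = (t powr (real n - 1) / (t + lam)\<^sup>2) powr q" for t
    have hm: "h \<in> borel_measurable borel" unfolding h_def by measurable
    have h0: "\<forall>t. 0 \<le> h t" by (simp add: h_def)
    have he: "h t = t powr ((real n - 1) * q) / (t + lam) powr (2 * q)" if "0 < t" for t
      unfolding h_def by (rule hG_pt[OF lam0 q that])
    define P where "P = K1 * lam powr (al - 2 * q)"
    define Q where "Q = K3 * lam powr (al - 2 * q)"
    have P0: "0 \<le> P" and Q0: "0 \<le> Q" using K1 K3 by (auto simp: P_def Q_def)
    have PB: "(\<integral>\<^sup>+ t. ennreal (indicator {0<..<eps0} t * (h t * t powr (- real (n + 1)))) \<partial>lborel) \<le> ennreal P"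
    proof -
      have "(\<integral>\<^sup>+ t. ennreal (indicator {0<..<eps0} t * (h t * t powr (- real (n + 1)))) \<partial>lborel)
          \<le> (\<integral>\<^sup>+ t. ennreal (lam powr (- 2 * q)) * ennreal (indicator {0<..<lam} t * t powr (al - 1))
                 + ennreal (indicator {lam..} t * t powr (al - 1 - 2 * q)) \<partial>lborel)"
      proof (rule nn_integral_mono)
        fix t :: real
        show "ennreal (indicator {0<..<eps0} t * (h t * t powr (- real (n + 1)))) \<le>
              ennreal (lam powr (- 2 * q)) * ennreal (indicator {0<..<lam} t * t powr (al - 1))
                 + ennreal (indicator {lam..} t * t powr (al - 1 - 2 * q))"
        proof (cases "0 < t \<and> t < eps0")
          case True
          then have t: "0 < t" by simp
          have e1: "h t * t powr (- real (n + 1)) = t powr (al - 1) / (t + lam) powr (2 * q)"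
            using t by (simp add: he al(1) powr_add[symmetric] algebra_simps)
          have b: "h t * t powr (- real (n + 1)) \<le> lam powr (- 2 * q) * (indicator {0<..<lam} t * t powr (al - 1))
                 + indicator {lam..} t * t powr (al - 1 - 2 * q)"
          proof (cases "t < lam")
            case True
            have "t powr (al - 1) / (t + lam) powr (2 * q) \<le> t powr (al - 1) / lam powr (2 * q)"
              using t lam0 q by (intro divide_left_mono powr_mono2 mult_pos_pos) auto
            then show ?thesis unfolding e1 using True t by (simp add: powr_minus divide_inverse)
          next
            case False
            have "t powr (al - 1) / (t + lam) powr (2 * q) \<le> t powr (al - 1) / t powr (2 * q)"
              using t lam0 q by (intro divide_left_mono powr_mono2 mult_pos_pos) auto
            also have "\<dots> = t powr (al - 1 - 2 * q)" by (simp add: powr_diff)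
            finally show ?thesis unfolding e1 using False t by (simp add: indicator_def)
          qed
          have "ennreal (indicator {0<..<eps0} t * (h t * t powr (- real (n + 1)))) \<le>
               ennreal (lam powr (- 2 * q) * (indicator {0<..<lam} t * t powr (al - 1))
                 + indicator {lam..} t * t powr (al - 1 - 2 * q))"
            using True b by (intro ennreal_leI) (simp add: indicator_def)
          then show ?thesis by (simp add: ennreal_mult)
        next
          case False
          then have "indicator {0<..<eps0} t = (0::real)" by (auto simp: indicator_def)
          then show ?thesis by simp
        qed
      qed
      also have "\<dots> = ennreal (lam powr (- 2 * q)) * (\<integral>\<^sup>+ t. ennreal (indicator {0<..<lam} t * t powr (al - 1)) \<partial>lborel)
             + (\<integral>\<^sup>+ t. ennreal (indicator {lam..} t * t powr (al - 1 - 2 * q)) \<partial>lborel)"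
        by (subst nn_integral_add) (auto simp: nn_integral_cmult)
      also have "\<dots> \<le> ennreal (lam powr (- 2 * q)) * ennreal (lam powr al / al)
             + ennreal (- (lam powr (al - 1 - 2 * q + 1)) / (al - 1 - 2 * q + 1))"
      proof -
        have i1: "(\<integral>\<^sup>+ t. ennreal (indicator {0<..<lam} t * t powr (al - 1)) \<partial>lborel) \<le> ennreal (lam powr al / al)"
          by (rule int_powr_0) (use lam0 al in auto)
        have i2: "(\<integral>\<^sup>+ t. ennreal (indicator {lam..} t * t powr (al - 1 - 2 * q)) \<partial>lborel) = ennreal (- (lam powr (al - 1 - 2 * q + 1)) / (al - 1 - 2 * q + 1))"
          by (rule int_powr_inf) (use lam0 al in auto)
        show ?thesis unfolding i2 by (intro add_mono mult_left_mono i1) auto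
      qed
      also have "\<dots> = ennreal (lam powr (- 2 * q) * (lam powr al / al) + (- (lam powr (al - 1 - 2 * q + 1)) / (al - 1 - 2 * q + 1)))"
      proof -
        have Z0: "0 \<le> - (lam powr (al - 1 - 2 * q + 1)) / (al - 1 - 2 * q + 1)"
          using al(3) by (intro divide_nonpos_neg) auto
        have Y0: "0 \<le> lam powr al / al" using al(2) by simp
        have "ennreal (lam powr (- 2 * q)) * ennreal (lam powr al / al) = ennreal (lam powr (- 2 * q) * (lam powr al / al))"
          by (rule ennreal_mult[symmetric]) (use Y0 in auto)
        moreover have "ennreal (lam powr (- 2 * q) * (lam powr al / al)) + ennreal (- (lam powr (al - 1 - 2 * q + 1)) / (al - 1 - 2 * q + 1))
           = ennreal (lam powr (- 2 * q) * (lam powr al / al) + (- (lam powr (al - 1 - 2 * q + 1)) / (al - 1 - 2 * q + 1)))"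
          by (rule ennreal_plus[symmetric], rule mult_nonneg_nonneg[OF _ Y0], simp, rule Z0)
        ultimately show ?thesis by simp
      qed
      also have "lam powr (- 2 * q) * (lam powr al / al) + (- (lam powr (al - 1 - 2 * q + 1)) / (al - 1 - 2 * q + 1)) = P"
      proof -
        have "lam powr (- 2 * q) * lam powr al = lam powr (al - 2 * q)" by (simp add: powr_add[symmetric])
        moreover have "- (lam powr (al - 1 - 2 * q + 1)) / (al - 1 - 2 * q + 1) = lam powr (al - 2 * q) / (2 * q - al)"
          using al by (simp add: field_simps)
        ultimately show ?thesis unfolding P_def K1_def by (simp add: field_simps)
      qed
      finally show ?thesis .
    qed
    have QB: "\<forall>m\<in>space M - Phi ` ({0<..<eps0} \<times> space Y). h (x m) \<le> Q"
    proof
      fix m assume m: "m \<in> space M - Phi ` ({0<..<eps0} \<times> space Y)"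
      then have cx: "c \<le> x m" and xB: "x m \<le> B" using cB by auto
      have xp: "0 < x m" using c cx by simp
      have "h (x m) = x m powr ((real n - 1) * q) / (x m + lam) powr (2 * q)" by (rule he[OF xp])
      also have "\<dots> \<le> \<bar>B\<bar> powr ((real n - 1) * q) / c powr (2 * q)"
        using xp xB cx c lam0 q n1 by (intro frac_le powr_mono2) auto
      also have "\<dots> \<le> \<bar>B\<bar> powr ((real n - 1) * q) / c powr (2 * q) * (3 powr (2 * q - al) * lam powr (al - 2 * q))"
      proof -
        have "1 \<le> (3 / lam) powr (2 * q - al)" using lam0 lam3 al by (intro ge_one_powr_ge_zero) auto
        also have "(3 / lam) powr (2 * q - al) = 3 powr (2 * q - al) * lam powr (al - 2 * q)"
        proof -
          have "lam powr (al - 2 * q) = inverse (lam powr (2 * q - al))" by (subst powr_minus[symmetric]) simp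
          then show ?thesis using lam0 by (subst powr_divide) (simp add: divide_inverse)
        qed
        finally have one: "1 \<le> 3 powr (2 * q - al) * lam powr (al - 2 * q)" .
        have nn: "0 \<le> \<bar>B\<bar> powr ((real n - 1) * q) / c powr (2 * q)" by simp
        show ?thesis using mult_left_mono[OF one nn] by simp
      qed
      also have "\<dots> = Q" by (simp add: Q_def K3_def)
      finally show "h (x m) \<le> Q" .
    qed
    have "(\<integral>\<^sup>+ m. ennreal (h (x m)) \<partial>M) \<le> ennreal (Kac * (P + Q))"
      using hm h0 P0 Q0 PB QB by (intro Kac) (simp only: conj_absorb simp_thms)
    also have "Kac * (P + Q) = DG * lam powr (al - 2 * q)"
      unfolding DG_def P_def Q_def by (simp add: algebra_simps)
    finally show "(\<integral>\<^sup>+ m. ennreal ((x m powr (real n - 1) / (x m + lam)\<^sup>2) powr q) \<partial>M) \<le> ennreal (DG * lam powr (al - 2 * q))"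
      by (simp add: h_def)
  qed
qed

lemma kernel_pt:
  fixes X X' L a b C kk e :: real
  assumes X: "0 < X" and X': "0 < X'" and L: "0 < L" and a: "0 \<le> a" and b: "0 \<le> b"
    and kk0: "0 \<le> kk" and kk: "kk \<le> C * (X * X') powr (e / 2) * (a + b) / (X + X' + L)"
  shows "kk\<^sup>2 \<le> 2 * C\<^sup>2 * (X powr e * a\<^sup>2 * (X' powr e / (X' + L)\<^sup>2) + X powr e / (X + L)\<^sup>2 * (X' powr e * b\<^sup>2))"
proof -
  define D where "D = X + X' + L"
  have D: "0 < D" using X X' L by (simp add: D_def)
  define S where "S = (X * X') powr (e / 2) * (a + b) / D"
  have S0: "0 \<le> S" using a b D by (simp add: S_def)
  have "kk \<le> C * S" using kk by (simp add: S_def D_def)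
  also have "\<dots> \<le> \<bar>C\<bar> * S" using S0 by (simp add: mult_right_mono)
  finally have "kk\<^sup>2 \<le> (\<bar>C\<bar> * S)\<^sup>2" using kk0 by (intro power_mono) auto
  also have "(\<bar>C\<bar> * S)\<^sup>2 = C\<^sup>2 * S\<^sup>2" by (simp add: power_mult_distrib)
  finally have k2: "kk\<^sup>2 \<le> C\<^sup>2 * S\<^sup>2" .
  have "S\<^sup>2 = X powr e * X' powr e * (a + b)\<^sup>2 / D\<^sup>2"
  proof -
    have "((X * X') powr (e / 2))\<^sup>2 = (X * X') powr (e / 2) * (X * X') powr (e / 2)" by (simp add: power2_eq_square)
    also have "\<dots> = (X * X') powr e" by (simp add: powr_add[symmetric])
    also have "\<dots> = X powr e * X' powr e" by (simp add: powr_mult)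
    finally show ?thesis by (simp add: S_def power_mult_distrib power_divide)
  qed
  also have "X powr e * X' powr e * (a + b)\<^sup>2 / D\<^sup>2 \<le> 2 * (X powr e * a\<^sup>2 * (X' powr e / (X' + L)\<^sup>2) + X powr e / (X + L)\<^sup>2 * (X' powr e * b\<^sup>2))"
  proof -
    have ab: "(a + b)\<^sup>2 \<le> 2 * a\<^sup>2 + 2 * b\<^sup>2"
    proof -
      have "0 \<le> (a - b)\<^sup>2" by simp
      then show ?thesis by (simp add: power2_eq_square algebra_simps)
    qed
    have P: "0 \<le> X powr e * X' powr e" by simp
    have "X powr e * X' powr e * (a + b)\<^sup>2 / D\<^sup>2 \<le> X powr e * X' powr e * (2 * a\<^sup>2 + 2 * b\<^sup>2) / D\<^sup>2"
      using D by (intro divide_right_mono mult_left_mono[OF ab P]) auto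
    also have "\<dots> = 2 * (X powr e * X' powr e * a\<^sup>2 / D\<^sup>2) + 2 * (X powr e * X' powr e * b\<^sup>2 / D\<^sup>2)"
      by (simp add: algebra_simps add_divide_distrib)
    also have "X powr e * X' powr e * a\<^sup>2 / D\<^sup>2 \<le> X powr e * X' powr e * a\<^sup>2 / (X' + L)\<^sup>2"
      using X X' L D by (intro divide_left_mono power_mono mult_pos_pos) (auto simp: D_def)
    also have "X powr e * X' powr e * b\<^sup>2 / D\<^sup>2 \<le> X powr e * X' powr e * b\<^sup>2 / (X + L)\<^sup>2"
      using X X' L D by (intro divide_left_mono power_mono mult_pos_pos) (auto simp: D_def)
    finally show ?thesis by (simp add: algebra_simps)
  qed
  finally have S2: "S\<^sup>2 \<le> 2 * (X powr e * a\<^sup>2 * (X' powr e / (X' + L)\<^sup>2) + X powr e / (X + L)\<^sup>2 * (X' powr e * b\<^sup>2))" .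
  have "kk\<^sup>2 \<le> C\<^sup>2 * (2 * (X powr e * a\<^sup>2 * (X' powr e / (X' + L)\<^sup>2) + X powr e / (X + L)\<^sup>2 * (X' powr e * b\<^sup>2)))"
    by (rule order_trans[OF k2 mult_left_mono[OF S2]]) simp
  then show ?thesis by (simp only: mult_ac)
qed

lemma prod_int:
  fixes u v :: "'a \<Rightarrow> ennreal"
  assumes M: "sigma_finite_measure M" and [measurable]: "u \<in> borel_measurable M" "v \<in> borel_measurable M"
  shows "(\<integral>\<^sup>+ z. u (fst z) * v (snd z) \<partial>(M \<Otimes>\<^sub>M M)) = (\<integral>\<^sup>+ m. u m \<partial>M) * (\<integral>\<^sup>+ m. v m \<partial>M)"
proof -
  interpret sigma_finite_measure M by (rule M)
  have "(\<integral>\<^sup>+ z. u (fst z) * v (snd z) \<partial>(M \<Otimes>\<^sub>M M)) = (\<integral>\<^sup>+ m. \<integral>\<^sup>+ m'. u m * v m' \<partial>M \<partial>M)"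
    by (subst nn_integral_fst[symmetric]) auto
  also have "\<dots> = (\<integral>\<^sup>+ m. u m * (\<integral>\<^sup>+ m'. v m' \<partial>M) \<partial>M)"
    by (simp add: nn_integral_cmult)
  also have "\<dots> = (\<integral>\<^sup>+ m. u m \<partial>M) * (\<integral>\<^sup>+ m. v m \<partial>M)"
    by (simp add: nn_integral_multc)
  finally show ?thesis .
qed

lemma sq_powr:
  fixes a p :: real
  assumes "0 \<le> a" "p \<noteq> 0"
  shows "(a\<^sup>2) powr p = a powr (2 * p)"
proof (cases "a = 0")
  case False
  then have "a\<^sup>2 = a powr 2" using assms by (simp add: powr_realpow')
  then show ?thesis by (simp add: powr_powr)
qed (use assms in simp)

lemma sq_helper:
  fixes C b c n1 n2 :: real
  shows "4 * C\<^sup>2 * n1\<^sup>2 * n2\<^sup>2 * (b\<^sup>2 * c\<^sup>2) = (2 * \<bar>C\<bar> * b * c * n1 * n2)\<^sup>2"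
  by (simp add: power_mult_distrib power2_abs)

theorem lemma5p4:
  fixes n :: nat and M :: "'m measure" and x :: "'m \<Rightarrow> real"
    and eps0 :: real and Y :: "'y measure" and Phi :: "real \<times> 'y \<Rightarrow> 'm"
    and rho :: "real \<times> 'y \<Rightarrow> real" and eps :: real and chi :: "real \<Rightarrow> real"
    and C p :: real
  assumes "3 \<le> n"
    and "ac_structure n M x eps0 Y Phi rho"
    and "cutoff eps chi"
    and "real n / 2 \<le> p" and "p \<le> (real n + 1) / 2"
  shows "\<exists>C'. \<forall>lam K W1 W2.
     0 < lam \<and> lam \<le> 3 \<and>
     (\<lambda>(m, m'). K m m') \<in> borel_measurable (M \<Otimes>\<^sub>M M) \<and>
     (\<forall>m\<in>space M. \<forall>m'\<in>space M.
        norm (K m m') \<le> C * (x m * x m') powr ((real n - 1) / 2)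
            * (chi (x m / lam) + chi (x m' / lam)) / (x m + x m' + lam)) \<and>
     in_Lp M (2 * p) W1 \<and> in_Lp M (2 * p) W2
     \<longrightarrow> hilbert_schmidt M (\<lambda>(m, m'). W1 m * K m m' * W2 m') \<and>
         hs_norm M (\<lambda>(m, m'). W1 m * K m m' * W2 m')
           \<le> C' * lam powr (- 2 + real n / p) * Lp_norm M (2 * p) W1 * Lp_norm M (2 * p) W2"
proof -
  note n3 = assms(1) and ac = assms(2) and co = assms(3) and plo = assms(4) and phi = assms(5)
  have n1: "1 \<le> n" using n3 by simp
  have p1: "1 < p" using n3 plo by simp
  define q where "q = p / (p - 1)"
  have q1: "1 < q" using p1 by (simp add: q_def field_simps)
  have q0: "0 < q" using q1 by simp
  have pq: "1 / p + 1 / q = 1" using p1 by (simp add: q_def field_simps)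
  define al where "al = (real n - 1) * q - real n"
  have al_eq: "al = (real n - p) / (p - 1)" using p1 by (simp add: al_def q_def field_simps)
  have al0: "0 < al" unfolding al_eq using p1 phi n3 by (intro divide_pos_pos) auto
  have al2: "al < 2 * q"
  proof -
    have "(real n - p) / (p - 1) < (2 * p) / (p - 1)"
      by (rule divide_strict_right_mono) (use plo p1 in auto)
    moreover have "2 * q = (2 * p) / (p - 1)" by (simp add: q_def)
    ultimately show ?thesis by (simp add: al_eq)
  qed
  define E where "E = - 2 + real n / p"
  have alE: "(2 * al - 2 * q) / q = 2 * E"
  proof -
    have pn: "p \<noteq> 0" "p - 1 \<noteq> 0" using p1 by auto
    have "al / q = (real n - p) / p" using pn by (simp add: al_eq q_def)
    moreover have "(2 * al - 2 * q) / q = 2 * (al / q) - 2" using q0 by (simp add: diff_divide_distrib)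
    moreover have "2 * ((real n - p) / p) - 2 = 2 * E" using pn by (simp add: E_def diff_divide_distrib)
    ultimately show ?thesis by simp
  qed
  obtain d Kc where d: "0 < d" and Kc: "0 \<le> Kc" and dz: "\<forall>t. d \<le> \<bar>t\<bar> \<longrightarrow> chi t = 0"
    and chi: "\<forall>t. 0 \<le> chi t \<and> chi t \<le> Kc" and chim: "chi \<in> borel_measurable borel"
    using cutoff_props[OF co] by (elim exE conjE)
  obtain DF where DFK: "DF \<ge> 0 \<and> (\<forall>lam. 0 < lam \<longrightarrow>
     (\<integral>\<^sup>+ m. ennreal ((x m powr (real n - 1) * (chi (x m / lam))\<^sup>2) powr q) \<partial>M) \<le> ennreal (DF * lam powr al))"
    using F_int_bound[OF ac q0 al_def al0 n1 d Kc dz chi chim] by (rule exE)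
  have DF0: "DF \<ge> 0" using DFK by (rule conjunct1)
  note DF = DFK[THEN conjunct2, rule_format]
  obtain DG where DGK: "DG \<ge> 0 \<and> (\<forall>lam. 0 < lam \<and> lam \<le> 3 \<longrightarrow>
     (\<integral>\<^sup>+ m. ennreal ((x m powr (real n - 1) / (x m + lam)\<^sup>2) powr q) \<partial>M) \<le> ennreal (DG * lam powr (al - 2 * q)))"
    using G_int_bound[OF ac q0 al_def al0 al2 n1] by (rule exE)
  have DG0: "DG \<ge> 0" using DGK by (rule conjunct1)
  note DG = DGK[THEN conjunct2, rule_format]
  have sf: "sigma_finite_measure M" and xm[measurable]: "x \<in> borel_measurable M" and xpos: "\<forall>m\<in>space M. 0 < x m"
    using ac unfolding ac_structure_def by auto
  have [measurable]: "chi \<in> borel_measurable borel" by (rule chim)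
  define C' where "C' = 2 * \<bar>C\<bar> * (DF * DG) powr (1 / (2 * q))"
  have C'0: "0 \<le> C'" by (simp add: C'_def)
  show ?thesis
  proof (intro exI[of _ C'] allI impI)
    fix lam :: real and K :: "'m \<Rightarrow> 'm \<Rightarrow> complex" and W1 W2 :: "'m \<Rightarrow> complex"
    assume H: "0 < lam \<and> lam \<le> 3 \<and>
     (\<lambda>(m, m'). K m m') \<in> borel_measurable (M \<Otimes>\<^sub>M M) \<and>
     (\<forall>m\<in>space M. \<forall>m'\<in>space M.
        norm (K m m') \<le> C * (x m * x m') powr ((real n - 1) / 2)
            * (chi (x m / lam) + chi (x m' / lam)) / (x m + x m' + lam)) \<and>
     in_Lp M (2 * p) W1 \<and> in_Lp M (2 * p) W2"
    then have lam0: "0 < lam" and lam3: "lam \<le> 3" and Km[measurable]: "(\<lambda>(m, m'). K m m') \<in> borel_measurable (M \<Otimes>\<^sub>M M)"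
      and Kb: "\<And>m m'. m \<in> space M \<Longrightarrow> m' \<in> space M \<Longrightarrow> norm (K m m') \<le> C * (x m * x m') powr ((real n - 1) / 2)
            * (chi (x m / lam) + chi (x m' / lam)) / (x m + x m' + lam)"
      and W1L: "in_Lp M (2 * p) W1" and W2L: "in_Lp M (2 * p) W2"
      by auto
    from W1L have W1m[measurable]: "W1 \<in> borel_measurable M" and int1: "integrable M (\<lambda>m. norm (W1 m) powr (2 * p))"
      unfolding in_Lp_def by auto
    from W2L have W2m[measurable]: "W2 \<in> borel_measurable M" and int2: "integrable M (\<lambda>m. norm (W2 m) powr (2 * p))"
      unfolding in_Lp_def by auto
    define A1 where "A1 = (\<integral>m. norm (W1 m) powr (2 * p) \<partial>M)"
    define A2 where "A2 = (\<integral>m. norm (W2 m) powr (2 * p) \<partial>M)"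
    define N1 where "N1 = Lp_norm M (2 * p) W1"
    define N2 where "N2 = Lp_norm M (2 * p) W2"
    have A10: "0 \<le> A1" and A20: "0 \<le> A2" by (auto simp: A1_def A2_def)
    have N1e: "A1 powr (1 / p) = N1\<^sup>2"
      unfolding N1_def Lp_norm_def A1_def[symmetric] power2_eq_square powr_add[symmetric] by simp
    have N2e: "A2 powr (1 / p) = N2\<^sup>2"
      unfolding N2_def Lp_norm_def A2_def[symmetric] power2_eq_square powr_add[symmetric] by simp
    have N10: "0 \<le> N1" and N20: "0 \<le> N2" by (auto simp: N1_def N2_def Lp_norm_def)
    define f1 where "f1 m = (norm (W1 m))\<^sup>2" for m
    define f2 where "f2 m = (norm (W2 m))\<^sup>2" for m
    have f1m[measurable]: "f1 \<in> borel_measurable M" and f2m[measurable]: "f2 \<in> borel_measurable M"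
      unfolding f1_def f2_def by measurable
    have f10: "\<And>m. 0 \<le> f1 m" and f20: "\<And>m. 0 \<le> f2 m" by (auto simp: f1_def f2_def)
    have f1p: "(\<integral>\<^sup>+ m. ennreal (f1 m powr p) \<partial>M) \<le> ennreal A1"
    proof -
      have "(\<integral>\<^sup>+ m. ennreal (f1 m powr p) \<partial>M) = (\<integral>\<^sup>+ m. ennreal (norm (W1 m) powr (2 * p)) \<partial>M)"
        using p1 by (intro nn_integral_cong) (simp add: f1_def sq_powr)
      also have "\<dots> = ennreal A1" unfolding A1_def by (rule nn_integral_eq_integral[OF int1]) auto
      finally show ?thesis by simp
    qed
    have f2p: "(\<integral>\<^sup>+ m. ennreal (f2 m powr p) \<partial>M) \<le> ennreal A2"
    proof -
      have "(\<integral>\<^sup>+ m. ennreal (f2 m powr p) \<partial>M) = (\<integral>\<^sup>+ m. ennreal (norm (W2 m) powr (2 * p)) \<partial>M)"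
        using p1 by (intro nn_integral_cong) (simp add: f2_def sq_powr)
      also have "\<dots> = ennreal A2" unfolding A2_def by (rule nn_integral_eq_integral[OF int2]) auto
      finally show ?thesis by simp
    qed
    define Fx where "Fx m = x m powr (real n - 1) * (chi (x m / lam))\<^sup>2" for m
    define Gx where "Gx m = x m powr (real n - 1) / (x m + lam)\<^sup>2" for m
    have Fxm[measurable]: "Fx \<in> borel_measurable M" and Gxm[measurable]: "Gx \<in> borel_measurable M"
      unfolding Fx_def Gx_def by measurable
    have Fx0: "\<And>m. 0 \<le> Fx m" and Gx0: "\<And>m. 0 \<le> Gx m" by (auto simp: Fx_def Gx_def)
    define uF where "uF = (DF * lam powr al) powr (1 / q)"
    define uG where "uG = (DG * lam powr (al - 2 * q)) powr (1 / q)"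
    have FB: "(\<integral>\<^sup>+ m. ennreal (Fx m powr q) \<partial>M) \<le> ennreal (DF * lam powr al)"
      unfolding Fx_def by (rule DF[OF lam0])
    have GB: "(\<integral>\<^sup>+ m. ennreal (Gx m powr q) \<partial>M) \<le> ennreal (DG * lam powr (al - 2 * q))"
      unfolding Gx_def using lam0 lam3 by (intro DG conjI)
    have DFl: "0 \<le> DF * lam powr al" and DGl: "0 \<le> DG * lam powr (al - 2 * q)" using DF0 DG0 by auto
    have I1F: "(\<integral>\<^sup>+ m. ennreal (f1 m * Fx m) \<partial>M) \<le> ennreal (N1\<^sup>2 * uF)"
      using holder_nn[OF f1m Fxm f10 Fx0 p1 q1 pq f1p FB A10 DFl] by (simp add: N1e uF_def)
    have I1G: "(\<integral>\<^sup>+ m. ennreal (f1 m * Gx m) \<partial>M) \<le> ennreal (N1\<^sup>2 * uG)"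
      using holder_nn[OF f1m Gxm f10 Gx0 p1 q1 pq f1p GB A10 DGl] by (simp add: N1e uG_def)
    have I2F: "(\<integral>\<^sup>+ m. ennreal (f2 m * Fx m) \<partial>M) \<le> ennreal (N2\<^sup>2 * uF)"
      using holder_nn[OF f2m Fxm f20 Fx0 p1 q1 pq f2p FB A20 DFl] by (simp add: N2e uF_def)
    have I2G: "(\<integral>\<^sup>+ m. ennreal (f2 m * Gx m) \<partial>M) \<le> ennreal (N2\<^sup>2 * uG)"
      using holder_nn[OF f2m Gxm f20 Gx0 p1 q1 pq f2p GB A20 DGl] by (simp add: N2e uG_def)
    define k where "k = (\<lambda>(m, m'). W1 m * K m m' * W2 m')"
    have km: "k \<in> borel_measurable (M \<Otimes>\<^sub>M M)"
    proof -
      have "(\<lambda>z. W1 (fst z) * (\<lambda>(m, m'). K m m') z * W2 (snd z)) \<in> borel_measurable (M \<Otimes>\<^sub>M M)"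
        by measurable
      then show ?thesis unfolding k_def by (simp add: split_beta)
    qed
    have pt: "ennreal ((norm (k z))\<^sup>2) \<le> ennreal (2 * C\<^sup>2) *
        (ennreal (f1 (fst z) * Fx (fst z)) * ennreal (f2 (snd z) * Gx (snd z))
         + ennreal (f1 (fst z) * Gx (fst z)) * ennreal (f2 (snd z) * Fx (snd z)))"
      if z: "z \<in> space (M \<Otimes>\<^sub>M M)" for z
    proof -
      obtain m m' where zz: "z = (m, m')" by (cases z)
      have m: "m \<in> space M" and m': "m' \<in> space M" using z by (auto simp: zz space_pair_measure)
      have kk: "(norm (K m m'))\<^sup>2 \<le> 2 * C\<^sup>2 * (Fx m * Gx m' + Gx m * Fx m')"
        unfolding Fx_def Gx_def
        by (rule kernel_pt[OF xpos[rule_format, OF m] xpos[rule_format, OF m'] lam0 _ _ norm_ge_zero Kb[OF m m']])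
           (use chi in auto)
      have "(norm (k z))\<^sup>2 = f1 m * (norm (K m m'))\<^sup>2 * f2 m'"
        by (simp add: k_def zz f1_def f2_def norm_mult power_mult_distrib)
      also have "\<dots> \<le> f1 m * (2 * C\<^sup>2 * (Fx m * Gx m' + Gx m * Fx m')) * f2 m'"
        using kk f10 f20 by (intro mult_right_mono mult_left_mono) auto
      also have "\<dots> = 2 * C\<^sup>2 * ((f1 m * Fx m) * (f2 m' * Gx m') + (f1 m * Gx m) * (f2 m' * Fx m'))"
        by (simp add: algebra_simps)
      finally have "ennreal ((norm (k z))\<^sup>2) \<le> ennreal (2 * C\<^sup>2 * ((f1 m * Fx m) * (f2 m' * Gx m') + (f1 m * Gx m) * (f2 m' * Fx m')))"
        by (rule ennreal_leI)
      also have "\<dots> = ennreal (2 * C\<^sup>2) *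
        (ennreal (f1 m * Fx m) * ennreal (f2 m' * Gx m') + ennreal (f1 m * Gx m) * ennreal (f2 m' * Fx m'))"
        using f10 f20 Fx0 Gx0 by (simp add: ennreal_mult ennreal_plus)
      finally show ?thesis by (simp add: zz)
    qed
    define R where "R = 2 * C\<^sup>2 * ((N1\<^sup>2 * uF) * (N2\<^sup>2 * uG) + (N1\<^sup>2 * uG) * (N2\<^sup>2 * uF))"
    have uF0: "0 \<le> uF" and uG0: "0 \<le> uG" by (auto simp: uF_def uG_def)
    have R0: "0 \<le> R" using uF0 uG0 by (simp add: R_def)
    have intB: "(\<integral>\<^sup>+ z. ennreal ((norm (k z))\<^sup>2) \<partial>(M \<Otimes>\<^sub>M M)) \<le> ennreal R"
    proof -
      have "(\<integral>\<^sup>+ z. ennreal ((norm (k z))\<^sup>2) \<partial>(M \<Otimes>\<^sub>M M)) \<le> (\<integral>\<^sup>+ z. ennreal (2 * C\<^sup>2) *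
        (ennreal (f1 (fst z) * Fx (fst z)) * ennreal (f2 (snd z) * Gx (snd z))
         + ennreal (f1 (fst z) * Gx (fst z)) * ennreal (f2 (snd z) * Fx (snd z))) \<partial>(M \<Otimes>\<^sub>M M))"
        by (rule nn_integral_mono) (rule pt)
      also have "\<dots> = ennreal (2 * C\<^sup>2) * ((\<integral>\<^sup>+ z. ennreal (f1 (fst z) * Fx (fst z)) * ennreal (f2 (snd z) * Gx (snd z)) \<partial>(M \<Otimes>\<^sub>M M))
         + (\<integral>\<^sup>+ z. ennreal (f1 (fst z) * Gx (fst z)) * ennreal (f2 (snd z) * Fx (snd z)) \<partial>(M \<Otimes>\<^sub>M M)))"
        by (subst nn_integral_cmult) (auto simp: nn_integral_add)
      also have "\<dots> = ennreal (2 * C\<^sup>2) * ((\<integral>\<^sup>+ m. ennreal (f1 m * Fx m) \<partial>M) * (\<integral>\<^sup>+ m. ennreal (f2 m * Gx m) \<partial>M)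
         + (\<integral>\<^sup>+ m. ennreal (f1 m * Gx m) \<partial>M) * (\<integral>\<^sup>+ m. ennreal (f2 m * Fx m) \<partial>M))"
        by (subst (1 2) prod_int[OF sf]) auto
      also have "\<dots> \<le> ennreal (2 * C\<^sup>2) * (ennreal (N1\<^sup>2 * uF) * ennreal (N2\<^sup>2 * uG) + ennreal (N1\<^sup>2 * uG) * ennreal (N2\<^sup>2 * uF))"
        by (intro mult_left_mono add_mono mult_mono I1F I1G I2F I2G) auto
      also have "\<dots> = ennreal R"
      proof -
        have a1: "0 \<le> N1\<^sup>2 * uF" "0 \<le> N2\<^sup>2 * uG" "0 \<le> N1\<^sup>2 * uG" "0 \<le> N2\<^sup>2 * uF" using uF0 uG0 by auto
        have b1: "ennreal (N1\<^sup>2 * uF) * ennreal (N2\<^sup>2 * uG) = ennreal (N1\<^sup>2 * uF * (N2\<^sup>2 * uG))"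
          by (rule ennreal_mult[symmetric]) (use a1 in auto)
        have b2: "ennreal (N1\<^sup>2 * uG) * ennreal (N2\<^sup>2 * uF) = ennreal (N1\<^sup>2 * uG * (N2\<^sup>2 * uF))"
          by (rule ennreal_mult[symmetric]) (use a1 in auto)
        have c0: "0 \<le> N1\<^sup>2 * uF * (N2\<^sup>2 * uG)" "0 \<le> N1\<^sup>2 * uG * (N2\<^sup>2 * uF)" using a1 by auto
        have b3: "ennreal (N1\<^sup>2 * uF * (N2\<^sup>2 * uG)) + ennreal (N1\<^sup>2 * uG * (N2\<^sup>2 * uF))
            = ennreal (N1\<^sup>2 * uF * (N2\<^sup>2 * uG) + N1\<^sup>2 * uG * (N2\<^sup>2 * uF))"
          by (rule ennreal_plus[symmetric]) (fact c0)+
        have d0: "0 \<le> N1\<^sup>2 * uF * (N2\<^sup>2 * uG) + N1\<^sup>2 * uG * (N2\<^sup>2 * uF)" by (rule add_nonneg_nonneg[OF c0])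
        have b4: "ennreal (2 * C\<^sup>2) * ennreal (N1\<^sup>2 * uF * (N2\<^sup>2 * uG) + N1\<^sup>2 * uG * (N2\<^sup>2 * uF)) = ennreal R"
          unfolding R_def by (rule ennreal_mult[symmetric]) (simp, fact d0)
        show ?thesis unfolding b1 b2 b3 b4 ..
      qed
      finally show ?thesis .
    qed
    have k2m: "(\<lambda>z. (norm (k z))\<^sup>2) \<in> borel_measurable (M \<Otimes>\<^sub>M M)" using km by measurable
    have HS: "hilbert_schmidt M k"
      unfolding hilbert_schmidt_def
    proof (intro conjI km)
      show "integrable (M \<Otimes>\<^sub>M M) (\<lambda>z. (norm (k z))\<^sup>2)"
      proof -
        have "(\<integral>\<^sup>+ z. ennreal ((norm (k z))\<^sup>2) \<partial>(M \<Otimes>\<^sub>M M)) < \<infinity>"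
          using le_less_trans[OF intB ennreal_less_top] by simp
        then show ?thesis unfolding integrable_iff_bounded using k2m by simp
      qed
    qed
    have "(\<integral>z. (norm (k z))\<^sup>2 \<partial>(M \<Otimes>\<^sub>M M)) = enn2real (\<integral>\<^sup>+ z. ennreal ((norm (k z))\<^sup>2) \<partial>(M \<Otimes>\<^sub>M M))"
      by (rule integral_eq_nn_integral[OF k2m]) auto
    also have "\<dots> \<le> R" by (rule enn2real_leI[OF R0 intB])
    finally have hsR: "(\<integral>z. (norm (k z))\<^sup>2 \<partial>(M \<Otimes>\<^sub>M M)) \<le> R" .
    have Req: "R = (C' * lam powr E * N1 * N2)\<^sup>2"
    proof -
      have e1: "uF * uG = (DF * DG) powr (1 / q) * lam powr (2 * E)"
      proof -
        have "uF * uG = (DF * lam powr al * (DG * lam powr (al - 2 * q))) powr (1 / q)"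
          by (simp add: uF_def uG_def powr_mult)
        also have "DF * lam powr al * (DG * lam powr (al - 2 * q)) = (DF * DG) * lam powr (2 * al - 2 * q)"
          by (simp add: powr_add[symmetric] algebra_simps)
        also have "((DF * DG) * lam powr (2 * al - 2 * q)) powr (1 / q) = (DF * DG) powr (1 / q) * lam powr ((2 * al - 2 * q) / q)"
          by (simp add: powr_mult powr_powr)
        finally show ?thesis by (simp add: alE)
      qed
      have e2: "((DF * DG) powr (1 / (2 * q)))\<^sup>2 = (DF * DG) powr (1 / q)"
        by (simp add: power2_eq_square powr_add[symmetric])
      have e3: "(lam powr E)\<^sup>2 = lam powr (2 * E)"
        by (simp add: power2_eq_square powr_add[symmetric])
      have "R = 4 * C\<^sup>2 * N1\<^sup>2 * N2\<^sup>2 * (uF * uG)" by (simp add: R_def algebra_simps)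
      also have "\<dots> = (C' * lam powr E * N1 * N2)\<^sup>2"
        unfolding e1 e2[symmetric] e3[symmetric] C'_def by (rule sq_helper)
      finally show ?thesis .
    qed
    have "hs_norm M k \<le> sqrt R" unfolding hs_norm_def using hsR by simp
    also have "sqrt R = C' * lam powr E * N1 * N2"
    proof -
      have nn: "0 \<le> C' * lam powr E * N1 * N2" using C'0 N10 N20 by simp
      show ?thesis unfolding Req by (rule real_sqrt_unique) (simp_all add: nn)
    qed
    finally have fin: "hs_norm M k \<le> C' * lam powr E * N1 * N2" .
    show "hilbert_schmidt M (\<lambda>(m, m'). W1 m * K m m' * W2 m') \<and>
         hs_norm M (\<lambda>(m, m'). W1 m * K m m' * W2 m')
           \<le> C' * lam powr (- 2 + real n / p) * Lp_norm M (2 * p) W1 * Lp_norm M (2 * p) W2"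
      using HS fin unfolding k_def E_def N1_def N2_def by (intro conjI)
  qed
qed

end
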